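(* For every integer $n\geq2$, \[\left(\zeta_{p^{n+1}}-1\right)^{-2p+2}=p^{-\frac{2}{p^n}}\left(1-(-1)^n\zeta_{2(p-1)}p^{\frac{1}{p^n(p-1)}}-\mathds{1}_3(p)\cdot 3^{\frac{2}{3^n\cdot 2}}\sigma_{n+1}+O\!\left(p^{\frac{2}{p^n(p-1)}}\right)\right),\] where $\mathds{1}_3(p)=1$ if $p=3$ and $0$ otherwise.
   Context: $p\geq 3$ is a prime. $\mathbb{L}_p=W(\bar{\mathbb{F}}_p)((p^{\mathbb{Q}}))$ is the $p$-adic Mal'cev–Neumann field: each element is uniquely $\sum_{x\in\mathbb{Q}}[\alpha_x]p^x$ with $\alpha_x\in\bar{\mathbb{F}}_p$, $[\cdot]$ the Teichmüller lift, and well-ordered support; it is an algebraically closed complete field with valuation $v_p(\alpha)=\min$ of the support ($v_p(p)=1$), and $\bar{\mathbb{Q}}_p$ is regarded as a subfield via a fixed continuous embedding. For $x\in\mathbb{Q}$, $p^x$ denotes $[1]p^x$ (and likewise $3^x$ when $p=3$). For $r\in\mathbb{Q}$, "$\alpha=\beta+O(p^r)$" means $v_p(\alpha-\beta)\geq r$; an expression $c\,(\cdots+O(p^r))$ means $c$ times an element of that form. $H_k=\sum_{i=1}^k1/i$. For $n\geq1$, $\sigma_n=\sum_{k=n}^{\infty}p^{-1/p^k}\in\mathbb{L}_p$. Fix a primitive $2(p-1)$-th root of unity $\zeta_{2(p-1)}\in W(\bar{\mathbb{F}}_p)$ and a system $(\zeta_{p^n})_{n\geq1}$ of primitive $p^n$-th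 roots of unity in $\mathbb{L}_p$ with $\zeta_{p^{n+1}}^p=\zeta_{p^n}$, normalized (as established in earlier work of the authors) so that for every $n\geq2$, writing $\zeta=\zeta_{2(p-1)}$, \[\zeta_{p^n}=\sum_{k=0}^{p-1}\frac{(-1)^{nk}}{k!}\zeta^k p^{\frac{k}{p^{n-1}(p-1)}}+\sum_{k=0}^{p-1}\frac{(-1)^{n(k+1)}}{k!}\zeta^{k+1}p^{\frac{k+p}{p^{n-1}(p-1)}}\sigma_n-\sum_{k=1}^{p-1}\frac{H_k}{k!}(-1)^{n(k+1)}\zeta^{k+1}p^{\frac{k+p}{p^{n-1}(p-1)}}+\frac12\zeta^2p^{\frac{2}{p^{n-2}(p-1)}}\sigma_n^2+\frac{(-1)^n}{2}\zeta^3p^{\frac{2}{p^{n-2}(p-1)}-\frac{p-2}{p^n(p-1)}}+O\!\left(p^{\frac{2}{p^{n-2}(p-1)}}\right).\] *)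

theory Defs
  imports Complex_Main "HOL-Computational_Algebra.Polynomial"
begin

text \<open>Abstract rendering of the p-adic Mal'cev--Neumann field L_p: a field 'a of
characteristic 0 carrying a Q-valued (rank one) valuation v (v is only meaningful on
nonzero elements; v 0 is irrelevant), together with the monomials p^x, x in Q.\<close>

definition nonarch_valuation :: "('a::field \<Rightarrow> rat) \<Rightarrow> bool" where
  "nonarch_valuation v \<longleftrightarrow>
     (\<forall>x y. x \<noteq> 0 \<longrightarrow> y \<noteq> 0 \<longrightarrow> v (x * y) = v x + v y) \<and>
     (\<forall>x y. x \<noteq> 0 \<longrightarrow> y \<noteq> 0 \<longrightarrow> x + y \<noteq> 0 \<longrightarrow> min (v x) (v y) \<le> v (x + y))"

text \<open>"alpha = O(p^r)": v(alpha) >= r (the zero element has valuation +infinity).\<close>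
definition bigO :: "('a::field \<Rightarrow> rat) \<Rightarrow> rat \<Rightarrow> 'a \<Rightarrow> bool" where
  "bigO v r x \<longleftrightarrow> x = 0 \<or> r \<le> v x"

definition alg_closed_field :: "'a::field itself \<Rightarrow> bool" where
  "alg_closed_field _ \<longleftrightarrow> (\<forall>f :: 'a poly. 0 < degree f \<longrightarrow> (\<exists>x. poly f x = 0))"

definition v_complete :: "('a::field \<Rightarrow> rat) \<Rightarrow> bool" where
  "v_complete v \<longleftrightarrow>
     (\<forall>s :: nat \<Rightarrow> 'a. (\<forall>B. \<exists>N. \<forall>m\<ge>N. \<forall>k\<ge>N. bigO v B (s m - s k)) \<longrightarrow>
        (\<exists>L. \<forall>B. \<exists>N. \<forall>m\<ge>N. bigO v B (s m - L)))"

definition primitive_root :: "nat \<Rightarrow> 'a::field \<Rightarrow> bool" where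
  "primitive_root m z \<longleftrightarrow> z ^ m = 1 \<and> (\<forall>k. 0 < k \<and> k < m \<longrightarrow> z ^ k \<noteq> 1)"

definition harm :: "nat \<Rightarrow> 'a::field" where
  "harm k = (\<Sum>i=1..k. 1 / of_nat i)"

definition zeta_expansion ::
  "('a::field \<Rightarrow> rat) \<Rightarrow> (rat \<Rightarrow> 'a) \<Rightarrow> nat \<Rightarrow> 'a \<Rightarrow> 'a \<Rightarrow> nat \<Rightarrow> 'a \<Rightarrow> bool" where
  "zeta_expansion v pp p \<zeta> s n z \<longleftrightarrow>
     (let q = (of_nat p :: rat);
          e = 1 / (q ^ (n - 1) * (q - 1));
          r = 2 / (q ^ (n - 2) * (q - 1))
      in bigO v r
        (z - ((\<Sum>k=0..p-1. ((-1) ^ (n * k) / of_nat (fact k)) * \<zeta> ^ k * pp (of_nat k * e))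
            + (\<Sum>k=0..p-1. ((-1) ^ (n * (k + 1)) / of_nat (fact k)) * \<zeta> ^ (k + 1)
                  * pp ((of_nat k + q) * e) * s)
            - (\<Sum>k=1..p-1. (harm k / of_nat (fact k)) * (-1) ^ (n * (k + 1)) * \<zeta> ^ (k + 1)
                  * pp ((of_nat k + q) * e))
            + (1 / 2) * \<zeta> ^ 2 * pp r * s ^ 2
            + ((-1) ^ n / 2) * \<zeta> ^ 3 * pp (r - (q - 2) / (q ^ n * (q - 1))))))"

end

theory Submission
  imports Defs "HOL-Computational_Algebra.Primes"
begin

locale nval =
  fixes v :: "'a::field_char_0 \<Rightarrow> rat"
  assumes nv: "nonarch_valuation v"
begin

lemma v_mult: "x \<noteq> 0 \<Longrightarrow> y \<noteq> 0 \<Longrightarrow> v (x * y) = v x + v y"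
  using nv unfolding nonarch_valuation_def by blast

lemma v_one: "v 1 = 0"
  using v_mult[of 1 1] by simp

lemma v_m1: "v (-1) = 0"
  using v_mult[of "-1" "-1"] v_one by simp

lemma v_uminus: "v (- x) = v x"
proof (cases "x = 0")
  case False
  then show ?thesis using v_mult[of "-1" x] v_m1 by simp
qed simp

lemma v_inverse: "x \<noteq> 0 \<Longrightarrow> v (inverse x) = - v x"
  using v_mult[of x "inverse x"] v_one by simp

lemma v_power: "x \<noteq> 0 \<Longrightarrow> v (x ^ k) = of_nat k * v x"
  by (induction k) (auto simp: v_one v_mult algebra_simps)

lemma O_0[simp]: "bigO v r 0"
  by (simp add: bigO_def)

lemma O_exact: "x \<noteq> 0 \<Longrightarrow> bigO v (v x) x"
  by (simp add: bigO_def)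

lemma O_mono: "bigO v r x \<Longrightarrow> s \<le> r \<Longrightarrow> bigO v s x"
  unfolding bigO_def by auto

lemma O_add: assumes "bigO v r x" "bigO v r y" shows "bigO v r (x + y)"
proof -
  have "r \<le> v (x + y)" if "x \<noteq> 0" "y \<noteq> 0" "x + y \<noteq> 0"
  proof -
    have "min (v x) (v y) \<le> v (x + y)" using nv that unfolding nonarch_valuation_def by blast
    moreover have "r \<le> v x" "r \<le> v y" using assms that by (auto simp: bigO_def)
    ultimately show ?thesis by linarith
  qed
  then show ?thesis using assms by (cases "x = 0"; cases "y = 0") (auto simp: bigO_def)
qed

lemma O_uminus: "bigO v r x \<Longrightarrow> bigO v r (- x)"
  by (simp add: bigO_def v_uminus)

lemma O_diff: "bigO v r x \<Longrightarrow> bigO v r y \<Longrightarrow> bigO v r (x - y)"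
  using O_add[of r x "-y"] O_uminus[of r y] by simp

lemma O_mult: assumes "bigO v r x" "bigO v s y" shows "bigO v (r + s) (x * y)"
  using assms by (cases "x = 0"; cases "y = 0") (auto simp: bigO_def v_mult)

lemma O_mult': "bigO v r x \<Longrightarrow> bigO v s y \<Longrightarrow> r + s \<ge> t \<Longrightarrow> bigO v t (x * y)"
  using O_mult O_mono by blast

lemma O_mult0: "bigO v 0 x \<Longrightarrow> bigO v 0 y \<Longrightarrow> bigO v 0 (x * y)"
  using O_mult[of 0 x 0 y] by simp

lemma O_sum: "(\<And>i. i \<in> A \<Longrightarrow> bigO v r (f i)) \<Longrightarrow> bigO v r (sum f A)"
  by (induction A rule: infinite_finite_induct) (auto intro: O_add)

lemma O_one: "bigO v 0 1"
  by (simp add: bigO_def v_one)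

lemma O_of_nat: "bigO v 0 (of_nat k)"
  by (induction k) (auto intro!: O_add O_one)

lemma O_of_int: "bigO v 0 (of_int k)"
proof (cases "k \<ge> 0")
  case True
  then show ?thesis using O_of_nat[of "nat k"] by simp
next
  case False
  then show ?thesis using O_uminus[OF O_of_nat[of "nat (-k)"]] by simp
qed

lemma O_power: "bigO v r x \<Longrightarrow> bigO v (of_nat k * r) (x ^ k)"
proof (induction k)
  case 0 then show ?case using O_one by simp
next
  case (Suc k)
  then have "bigO v (r + of_nat k * r) (x * x ^ k)" using O_mult by blast
  then show ?case by (simp add: algebra_simps)
qed

lemma O_inverse: "x \<noteq> 0 \<Longrightarrow> bigO v (- v x) (inverse x)"
  using O_exact[of "inverse x"] by (simp add: v_inverse)

lemma O_m1pow: "bigO v 0 ((-1) ^ k)"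
  using O_power[of 0 "-1" k] O_uminus[OF O_one] by simp

lemma v_ge0_imp_pos: assumes "bigO v 0 x" "x \<noteq> 0" shows "0 \<le> v x"
  using assms by (simp add: bigO_def)

context
  fixes p :: nat
  assumes pr: "prime p" and vp: "v (of_nat p) = 1"
begin

lemma v_unit: assumes "\<not> p dvd i" shows "v (of_nat i) = 0"
proof (rule ccontr)
  assume ne: "v (of_nat i) \<noteq> 0"
  have i0: "i \<noteq> 0" using assms by (metis dvd_0_right)
  have "(of_nat i :: 'a) \<noteq> 0" using i0 by simp
  then have "0 \<le> v (of_nat i)" using v_ge0_imp_pos O_of_nat by blast
  with ne have pos: "0 < v (of_nat i)" by simp
  have pnz: "(of_nat p :: 'a) \<noteq> 0" using pr by (simp add: prime_gt_0_nat)
  define t where "t = min (v (of_nat i)) 1"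
  have tpos: "0 < t" using pos by (simp add: t_def)
  have "coprime p i" by (rule prime_imp_coprime[OF pr assms])
  then have "coprime (int i) (int p)" by (simp add: ac_simps)
  then obtain a b where ab: "a * int i + b * int p = 1"
    using bezout_int[of "int i" "int p"] by auto
  then have "(of_int (a * int i + b * int p) :: 'a) = 1" by simp
  then have eq: "of_int a * of_nat i + of_int b * of_nat p = (1::'a)" by simp
  have "bigO v (0 + v (of_nat i)) (of_int a * (of_nat i :: 'a))"
    by (rule O_mult[OF O_of_int O_exact[OF \<open>(of_nat i :: 'a) \<noteq> 0\<close>]])
  then have h1: "bigO v t (of_int a * (of_nat i :: 'a))" by (rule O_mono) (simp add: t_def)
  have "bigO v (0 + v (of_nat p)) (of_int b * (of_nat p :: 'a))"
    by (rule O_mult[OF O_of_int O_exact[OF pnz]])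
  then have h2: "bigO v t (of_int b * (of_nat p :: 'a))" by (rule O_mono) (simp add: t_def vp)
  have "bigO v t (1::'a)" using O_add[OF h1 h2] eq by simp
  then show False using tpos by (simp add: bigO_def v_one)
qed

lemma v_fact: "k < p \<Longrightarrow> v (of_nat (fact k) :: 'a) = 0"
proof (induction k)
  case 0 then show ?case by (simp add: v_one)
next
  case (Suc k)
  have "\<not> p dvd Suc k" using Suc.prems by (auto dest: dvd_imp_le)
  then have "v (of_nat (Suc k) :: 'a) = 0" by (rule v_unit)
  moreover have "(of_nat (fact k) :: 'a) \<noteq> 0" by simp
  moreover have "(of_nat (fact (Suc k)) :: 'a) = of_nat (Suc k) * of_nat (fact k)"
    by (simp only: fact_Suc of_nat_id of_nat_mult)
  moreover have "v (of_nat (fact k) :: 'a) = 0" using Suc by simp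
  moreover have "v (of_nat (Suc k) * (of_nat (fact k)::'a)) = v (of_nat (Suc k)::'a) + v (of_nat (fact k)::'a)"
    by (rule v_mult[OF of_nat_neq_0]; simp)
  ultimately show ?case by (simp only:)
qed


lemma O_invfact: assumes "k < p" shows "bigO v 0 (1 / of_nat (fact k) :: 'a)"
proof -
  have nz: "(of_nat (fact k) :: 'a) \<noteq> 0" by (simp only: of_nat_eq_0_iff fact_nonzero not_False_eq_True)
  have "bigO v (- v (of_nat (fact k) :: 'a)) (inverse (of_nat (fact k) :: 'a))" by (rule O_inverse[OF nz])
  then show ?thesis by (simp only: v_fact[OF assms] neg_0_equal_iff_equal divide_inverse mult_1_left minus_zero)
qed

lemma O_inv_unit: assumes "0 < i" "i < p" shows "bigO v 0 (1 / of_nat i :: 'a)"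
proof -
  have nz: "(of_nat i :: 'a) \<noteq> 0" using assms(1) by simp
  have nd: "\<not> p dvd i" using nat_dvd_not_less[OF assms] .
  have "bigO v (- v (of_nat i :: 'a)) (inverse (of_nat i :: 'a))" by (rule O_inverse[OF nz])
  then show ?thesis by (simp only: v_unit[OF nd] divide_inverse mult_1_left minus_zero)
qed

lemma O_harm: "k < p \<Longrightarrow> bigO v 0 (harm k :: 'a)"
  unfolding harm_def
proof (rule O_sum)
  fix i assume "k < p" "i \<in> {1..k}"
  then show "bigO v 0 (1 / of_nat i :: 'a)" by (intro O_inv_unit) auto
qed

end

lemma O_divfact: assumes "prime p" "v (of_nat p) = 1" "k < p" "bigO v 0 c"
  shows "bigO v 0 (c / of_nat (fact k) :: 'a)"
  using O_mult[OF assms(4) O_invfact[OF assms(1,2,3)]] by (simp add: divide_inverse)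

lemma O_binom: assumes "bigO v 0 u"
  shows "\<exists>R. bigO v 0 R \<and> (1 + u) ^ k = 1 + of_nat k * u + u ^ 2 * R"
proof (induction k)
  case 0
  show ?case by (rule exI[of _ 0]) simp
next
  case (Suc k)
  then obtain R where R: "bigO v 0 R" "(1 + u) ^ k = 1 + of_nat k * u + u ^ 2 * R" by blast
  define R' where "R' = of_nat k + R + u * R"
  have "bigO v 0 R'" unfolding R'_def
    using O_add[OF O_add[OF O_of_nat R(1)] O_mult0[OF assms R(1)]] by simp
  moreover have "(1 + u) ^ Suc k = 1 + of_nat (Suc k) * u + u ^ 2 * R'"
    unfolding R'_def by (simp add: R(2) algebra_simps power2_eq_square)
  ultimately show ?case by blast
qed

lemma O_invpow: assumes u: "bigO v t u" and t: "0 < t"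
  shows "bigO v (2 * t) (inverse (1 + u) ^ k - 1 + of_nat k * u)"
proof -
  have u0: "bigO v 0 u" using O_mono[OF u] t by simp
  define w where "w = 1 + u"
  have w0: "w \<noteq> 0"
  proof
    assume "w = 0"
    then have "u = -1" unfolding w_def by (simp add: eq_neg_iff_add_eq_0 add.commute)
    then show False using u t by (simp add: bigO_def v_m1)
  qed
  have Ow: "bigO v 0 w" unfolding w_def using O_add[OF O_one u0] .
  have vw: "v w = 0"
  proof (rule ccontr)
    assume "v w \<noteq> 0"
    with Ow w0 have pos: "0 < v w" by (simp add: bigO_def)
    define m where "m = min (v w) t"
    have "bigO v m w" using O_exact[OF w0] by (rule O_mono) (simp add: m_def)
    moreover have "bigO v m u" using u by (rule O_mono) (simp add: m_def)
    ultimately have "bigO v m (w - u)" by (rule O_diff)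
    then have "bigO v m 1" by (simp add: w_def)
    then show False using pos t by (simp add: bigO_def v_one m_def)
  qed
  have wk0: "w ^ k \<noteq> 0" using w0 by simp
  have Oi: "bigO v 0 (inverse w ^ k)"
  proof -
    have "bigO v (- v (w ^ k)) (inverse (w ^ k))" by (rule O_inverse[OF wk0])
    then show ?thesis by (simp add: v_power[OF w0] vw power_inverse)
  qed
  obtain R where R: "bigO v 0 R" "w ^ k = 1 + of_nat k * u + u ^ 2 * R"
    using O_binom[OF u0] unfolding w_def by blast
  define Q where "Q = (of_nat k) ^ 2 - R + of_nat k * u * R"
  have OQ: "bigO v 0 Q" unfolding Q_def
    using O_add[OF O_diff[OF O_mult0[OF O_of_nat O_of_nat, of k k] R(1)] O_mult0[OF O_mult0[OF O_of_nat u0] R(1)]]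
    by (simp add: power2_eq_square)
  have Ou2: "bigO v (2 * t) (u ^ 2)" using O_power[OF u, of 2] by simp
  have eq: "inverse w ^ k - 1 + of_nat k * u = inverse w ^ k * (u ^ 2 * Q)"
  proof -
    have "inverse w ^ k * w ^ k = 1" using wk0 by (simp add: power_inverse)
    then have "inverse w ^ k - 1 + of_nat k * u = inverse w ^ k * (1 - w ^ k * (1 - of_nat k * u))"
      by (simp add: algebra_simps)
    also have "1 - w ^ k * (1 - of_nat k * u) = u ^ 2 * Q"
      unfolding R(2) Q_def by (simp add: algebra_simps power2_eq_square)
    finally show ?thesis .
  qed
  have "bigO v (0 + (2 * t + 0)) (inverse w ^ k * (u ^ 2 * Q))"
    by (rule O_mult[OF Oi O_mult[OF Ou2 OQ]])
  then show ?thesis using eq unfolding w_def by simp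
qed

end
theorem proposition2p3:
  fixes v :: "'a::field_char_0 \<Rightarrow> rat"
    and pp :: "rat \<Rightarrow> 'a"
    and p :: nat
    and \<zeta> :: 'a
    and zp :: "nat \<Rightarrow> 'a"
    and \<sigma> :: "nat \<Rightarrow> 'a"
    and n :: nat
  assumes "prime p" and "3 \<le> p"
    and "nonarch_valuation v" and "v_complete v" and "alg_closed_field TYPE('a)"
    and "v (of_nat p) = 1"
    and "\<And>x. pp x \<noteq> 0" and "\<And>x. v (pp x) = x"
    and "\<And>x y. pp (x + y) = pp x * pp y" and "pp 1 = of_nat p"
    and "primitive_root (2 * (p - 1)) \<zeta>"
    and "\<And>m. 1 \<le> m \<Longrightarrow> primitive_root (p ^ m) (zp m)"
    and "\<And>m. 1 \<le> m \<Longrightarrow> zp (Suc m) ^ p = zp m"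
    and "\<And>m. 1 \<le> m \<Longrightarrow> \<sigma> m = pp (- 1 / of_nat p ^ m) + \<sigma> (Suc m)"
    and "\<And>m. 1 \<le> m \<Longrightarrow> \<sigma> m \<noteq> 0 \<and> v (\<sigma> m) = - 1 / of_nat p ^ m"
    and "\<And>m. 2 \<le> m \<Longrightarrow> zeta_expansion v pp p \<zeta> (\<sigma> m) m (zp m)"
    and "2 \<le> n"
  shows "\<exists>\<epsilon>. bigO v (2 / (of_nat p ^ n * (of_nat p - 1))) \<epsilon> \<and>
     inverse (zp (Suc n) - 1) ^ (2 * p - 2)
       = pp (- 2 / of_nat p ^ n) *
         (1 - (-1) ^ n * \<zeta> * pp (1 / (of_nat p ^ n * (of_nat p - 1)))
            - (if p = 3 then pp (2 / (3 ^ n * 2)) * \<sigma> (Suc n) else 0)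
            + \<epsilon>)"
proof -
  interpret nval v by (rule nval.intro) (rule assms(3))
  have pr: "prime p" and p3: "3 \<le> p" and vp: "v (of_nat p) = 1" and n2: "2 \<le> n"
    using assms(1,2,6,17) by auto
  have ppnz: "\<And>x. pp x \<noteq> 0" and vpp: "\<And>x. v (pp x) = x"
    and ppadd: "\<And>x y. pp (x + y) = pp x * pp y" using assms(7,8,9) by auto
  have Opp: "\<And>x. bigO v x (pp x)" using O_exact[OF ppnz] vpp by metis
  have pp0: "pp 0 = 1" using ppadd[of 0 0] ppnz[of 0] by simp
  have ppneg: "\<And>x. pp (- x) = inverse (pp x)"
  proof -
    fix x have "pp x * pp (- x) = 1" using ppadd[of x "-x"] pp0 by simp
    then show "pp (- x) = inverse (pp x)" by (simp add: field_simps ppnz)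
  qed
  have pppow: "\<And>x k. pp x ^ k = pp (of_nat k * x)"
  proof -
    fix x k show "pp x ^ k = pp (of_nat k * x)"
      by (induction k) (simp_all add: pp0 ppadd[symmetric] algebra_simps)
  qed
  define q :: rat where "q = of_nat p"
  have q3: "3 \<le> q" using p3 by (simp add: q_def)
  define N where "N = Suc n"
  have N3: "3 \<le> N" using n2 by (simp add: N_def)
  define e :: rat where "e = 1 / (of_nat p ^ n * (of_nat p - 1))"
  have qn9: "9 \<le> q ^ n"
  proof -
    have "q ^ 2 \<le> q ^ n" using n2 q3 by (intro power_increasing) auto
    moreover have "3 * 3 \<le> q * q" using q3 by (intro mult_mono) auto
    then have "9 \<le> q ^ 2" by (simp add: power2_eq_square)
    ultimately show ?thesis by simp
  qed
  have den: "18 \<le> q ^ n * (q - 1)"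
  proof -
    have "9 * 2 \<le> q ^ n * (q - 1)" using qn9 q3 by (intro mult_mono) auto
    then show ?thesis by simp
  qed
  have e_q: "e = 1 / (q ^ n * (q - 1))" by (simp add: e_def q_def)
  have epos: "0 < e" using den by (simp add: e_q)
  have ele: "e \<le> 1" using den by (simp add: e_q)
  define w :: rat where "w = 1 / q ^ N"
  have w_eq: "w = e * (q - 1) / q" using q3 by (simp add: w_def e_q N_def field_simps)
  have wpos: "0 \<le> w" using q3 by (simp add: w_def)
  have wle: "w \<le> e" using q3 epos by (simp add: w_eq divide_le_eq algebra_simps)
  have qe3: "3 * e \<le> q * e" using q3 epos by (intro mult_right_mono) auto
  have zr: "\<zeta> ^ (2 * (p - 1)) = 1" using assms(11) by (simp add: primitive_root_def)
  have z0: "\<zeta> \<noteq> 0" using zr p3 by (cases "\<zeta> = 0") (auto simp: power_0_left split: if_splits)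
  have vz: "v \<zeta> = 0"
  proof -
    have "v (\<zeta> ^ (2 * (p - 1))) = of_nat (2 * (p - 1)) * v \<zeta>" by (rule v_power[OF z0])
    then have "of_nat (2 * (p - 1)) * v \<zeta> = 0" using zr v_one by simp
    moreover have "(of_nat (2 * (p - 1)) :: rat) \<noteq> 0" using p3 by simp
    ultimately show ?thesis by simp
  qed
  have Oz: "\<And>k. bigO v 0 (\<zeta> ^ k)" using O_power[OF O_exact[OF z0]] vz by simp
  define s where "s = \<sigma> N"
  have s0: "s \<noteq> 0" and vs: "v s = - w" using assms(15)[of N] N3 by (auto simp: s_def w_def q_def)
  have Os: "bigO v (- w) s" using O_exact[OF s0] vs by simp
  define T where "T = (-1) ^ N * \<zeta> * pp e"
  have m1N0: "((-1) ^ N :: 'a) \<noteq> 0" by simp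
  have vm1N: "v ((-1) ^ N :: 'a) = 0" using v_power[of "-1" N] v_m1 by simp
  have T0: "T \<noteq> 0" unfolding T_def using z0 ppnz by simp
  have vT: "v T = e" unfolding T_def
    using v_mult[of "(-1) ^ N * \<zeta>" "pp e"] v_mult[OF m1N0 z0] z0 ppnz vm1N vz vpp by simp
  define d where "d = (if p = 3 then pp (2 * e) * s else 0)"
  define e1 where "e1 = 1 / (q ^ (N - 1) * (q - 1))"
  define r where "r = 2 / (q ^ (N - 2) * (q - 1))"
  have e1e: "e1 = e" by (simp add: e1_def e_q N_def)
  have qnn: "q ^ n = q * q ^ (n - 1)" using n2 by (cases n) auto
  have r_eq: "r = 2 * q * e" using q3 unfolding r_def e_q N_def by (simp add: qnn field_simps)
  define a where "a = (\<lambda>k::nat. ((-1) ^ (N * k) / of_nat (fact k)) * \<zeta> ^ k * pp (of_nat k * e1))"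
  define b where "b = (\<lambda>k::nat. ((-1) ^ (N * (k + 1)) / of_nat (fact k)) * \<zeta> ^ (k + 1) * pp ((of_nat k + q) * e1) * s)"
  define c where "c = (\<lambda>k::nat. (harm k / of_nat (fact k)) * (-1) ^ (N * (k + 1)) * \<zeta> ^ (k + 1) * pp ((of_nat k + q) * e1))"
  define S4 where "S4 = (1 / 2) * \<zeta> ^ 2 * pp r * s ^ 2"
  define S5 where "S5 = ((-1) ^ N / 2) * \<zeta> ^ 3 * pp (r - (q - 2) / (q ^ N * (q - 1)))"
  have expn: "bigO v r (zp N - ((\<Sum>k=0..p-1. a k) + (\<Sum>k=0..p-1. b k) - (\<Sum>k=1..p-1. c k) + S4 + S5))"
    using assms(16)[of N] N3 unfolding zeta_expansion_def Let_def a_def b_def c_def S4_def S5_def r_def e1_def q_def s_def by simp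
  have qpos: "0 < q" and q1: "0 < q - 1" using q3 by auto
  have qe4: "p \<noteq> 3 \<Longrightarrow> 4 * e \<le> q * e"
  proof -
    assume "p \<noteq> 3"
    then have "4 \<le> p" using p3 by auto
    then have "4 \<le> q" by (simp add: q_def)
    then show "4 * e \<le> q * e" using epos by (intro mult_right_mono) auto
  qed
  have r6: "6 * e \<le> r"
  proof -
    have "r = 2 * (q * e)" using r_eq by simp
    then show ?thesis using qe3 by linarith
  qed
  have half: "bigO v 0 (1 / 2 :: 'a)" using O_inv_unit[OF pr vp, of 2] p3 by simp
  have Oa: "bigO v (3 * e) (a k)" if k: "k \<in> {3..p-1}" for k
  proof -
    have kp: "k < p" and k3: "3 \<le> k" using k p3 by auto
    have C: "bigO v 0 ((-1) ^ (N * k) / of_nat (fact k) * \<zeta> ^ k)"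
      by (rule O_mult0[OF O_divfact[OF pr vp kp O_m1pow] Oz])
    have "3 * e \<le> of_nat k * e" using k3 epos by (intro mult_right_mono) auto
    then have "bigO v (3 * e) ((-1) ^ (N * k) / of_nat (fact k) * \<zeta> ^ k * pp (of_nat k * e))"
      by (intro O_mult'[OF C Opp]) simp
    then show ?thesis unfolding a_def e1e .
  qed
  have Ob: "bigO v (3 * e) (b k)" if k: "k \<in> {1..p-1} \<or> (k = 0 \<and> p \<noteq> 3)" for k
  proof -
    have kp: "k < p" using k p3 by auto
    have C: "bigO v 0 ((-1) ^ (N * (k + 1)) / of_nat (fact k) * \<zeta> ^ (k + 1))"
      by (rule O_mult0[OF O_divfact[OF pr vp kp O_m1pow] Oz])
    have ineq: "3 * e \<le> (of_nat k + q) * e + - w"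
    proof (cases "k = 0")
      case True
      then show ?thesis using k qe4 wle by auto
    next
      case False
      then have "e \<le> of_nat k * e" using mult_right_mono[of 1 "of_nat k" e] epos by simp
      moreover have "(of_nat k + q) * e = of_nat k * e + q * e" by (simp add: distrib_right)
      ultimately show ?thesis using qe3 wle by linarith
    qed
    have "bigO v ((of_nat k + q) * e) ((-1) ^ (N * (k + 1)) / of_nat (fact k) * \<zeta> ^ (k + 1) * pp ((of_nat k + q) * e))"
      by (intro O_mult'[OF C Opp]) simp
    then have "bigO v (3 * e) ((-1) ^ (N * (k + 1)) / of_nat (fact k) * \<zeta> ^ (k + 1) * pp ((of_nat k + q) * e) * s)"
      using ineq by (intro O_mult'[OF _ Os])
    then show ?thesis unfolding b_def e1e .
  qed
  have Oc: "bigO v (3 * e) (c k)" if k: "k \<in> {1..p-1}" for k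
  proof -
    have kp: "k < p" using k p3 by auto
    have C: "bigO v 0 (harm k / of_nat (fact k) * (-1) ^ (N * (k + 1)) * \<zeta> ^ (k + 1))"
      by (rule O_mult0[OF O_mult0[OF O_divfact[OF pr vp kp O_harm[OF pr vp kp]] O_m1pow] Oz])
    have "e \<le> of_nat k * e" using mult_right_mono[of 1 "of_nat k" e] epos k by simp
    moreover have "(of_nat k + q) * e = of_nat k * e + q * e" by (simp add: distrib_right)
    ultimately have ineq: "3 * e \<le> (of_nat k + q) * e" using qe3 epos by linarith
    have "bigO v (3 * e) (harm k / of_nat (fact k) * (-1) ^ (N * (k + 1)) * \<zeta> ^ (k + 1) * pp ((of_nat k + q) * e))"
      using ineq by (intro O_mult'[OF C Opp]) simp
    then show ?thesis unfolding c_def e1e .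
  qed
  have OS4: "bigO v (3 * e) S4"
  proof -
    have C: "bigO v 0 (1 / 2 * \<zeta> ^ 2)" by (rule O_mult0[OF half Oz])
    have "bigO v r (1 / 2 * \<zeta> ^ 2 * pp r)" by (intro O_mult'[OF C Opp]) simp
    moreover have "bigO v (of_nat 2 * - w) (s ^ 2)" by (rule O_power[OF Os])
    moreover have "3 * e \<le> r + of_nat 2 * - w" using r6 wle epos by simp
    ultimately show ?thesis unfolding S4_def by (rule O_mult')
  qed
  have OS5: "bigO v (3 * e) S5"
  proof -
    have C: "bigO v 0 ((-1) ^ N / 2 * \<zeta> ^ 3)"
      using O_mult0[OF O_mult0[OF O_m1pow half] Oz, of N 3] by simp
    have "(q - 2) / (q ^ N * (q - 1)) = w * ((q - 2) / (q - 1))" by (simp add: w_def)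
    also have "\<dots> \<le> w * 1" using wpos q1 by (intro mult_left_mono) auto
    finally have x0: "(q - 2) / (q ^ N * (q - 1)) \<le> e" using wle by simp
    have "3 * e \<le> r - (q - 2) / (q ^ N * (q - 1))" using x0 r6 epos by linarith
    then show ?thesis unfolding S5_def by (intro O_mult'[OF C Opp]) simp
  qed
  have Oexp: "bigO v (3 * e) (zp N - ((\<Sum>k=0..p-1. a k) + (\<Sum>k=0..p-1. b k) - (\<Sum>k=1..p-1. c k) + S4 + S5))"
    using expn by (rule O_mono) (use r6 epos in linarith)
  have Od: "bigO v (2 * e - w) d"
    unfolding d_def using O_mult[OF Opp Os, of "2 * e"] by simp
  have a0: "a 0 = 1" unfolding a_def by (simp add: pp0)
  have a1: "a 1 = T" unfolding a_def T_def e1e by simp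
  have a2: "a 2 = T * T / 2" unfolding a_def T_def e1e
    using ppadd[of e e] by (simp add: power_mult[symmetric] mult_2 algebra_simps power2_eq_square)
  have b0: "p = 3 \<Longrightarrow> b 0 = T * d"
  proof -
    assume p3': "p = 3"
    have "pp (q * e) = pp e * pp (2 * e)" using ppadd[of e "2 * e"] p3' by (simp add: q_def algebra_simps)
    then show "b 0 = T * d" unfolding b_def T_def d_def e1e using p3' by (simp add: algebra_simps)
  qed
  have p1: "2 \<le> p - 1" using p3 by simp
  have Sa: "(\<Sum>k=0..p-1. a k) = a 0 + a 1 + a 2 + (\<Sum>k=3..p-1. a k)"
  proof -
    have "(\<Sum>k=0..p-1. a k) = a 0 + (\<Sum>k=1..p-1. a k)" using sum.atLeast_Suc_atMost[of 0 "p-1" a] by simp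
    moreover have "(\<Sum>k=1..p-1. a k) = a 1 + (\<Sum>k=2..p-1. a k)" using sum.atLeast_Suc_atMost[of 1 "p-1" a] p1 by (simp add: numeral_2_eq_2)
    moreover have "(\<Sum>k=2..p-1. a k) = a 2 + (\<Sum>k=3..p-1. a k)" using sum.atLeast_Suc_atMost[of 2 "p-1" a] p1 by (simp add: numeral_3_eq_3)
    ultimately show ?thesis by simp
  qed
  have Sb: "(\<Sum>k=0..p-1. b k) = b 0 + (\<Sum>k=1..p-1. b k)" using sum.atLeast_Suc_atMost[of 0 "p-1" b] by simp
  define Rest where "Rest = (zp N - ((\<Sum>k=0..p-1. a k) + (\<Sum>k=0..p-1. b k) - (\<Sum>k=1..p-1. c k) + S4 + S5))
     + (\<Sum>k=3..p-1. a k) + (\<Sum>k=1..p-1. b k) + (b 0 - T * d) - (\<Sum>k=1..p-1. c k) + S4 + S5"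
  have Rest_eq: "zp N - 1 - T - T * T / 2 - T * d = Rest"
    unfolding Rest_def Sa Sb a0 a1 a2 by (simp add: algebra_simps)
  have Ob0: "bigO v (3 * e) (b 0 - T * d)"
  proof (cases "p = 3")
    case True then show ?thesis using b0 by simp
  next
    case False then show ?thesis using Ob[of 0] by (simp add: d_def)
  qed
  have ORest: "bigO v (3 * e) Rest" unfolding Rest_def
    by (intro O_add O_diff Oexp O_sum Oa Ob Oc Ob0 OS4 OS5) auto
  define F where "F = (zp N - 1 - T - T * T / 2 - T * d) / T"
  have OF: "bigO v (2 * e) F"
  proof -
    have "bigO v (3 * e + - v T) (Rest * inverse T)" by (rule O_mult[OF ORest O_inverse[OF T0]])
    then show ?thesis unfolding F_def Rest_eq vT by (simp add: divide_inverse)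
  qed
  define u where "u = T / 2 + d + F"
  have X: "zp N - 1 = T * (1 + u)" unfolding u_def F_def using T0 by (simp add: field_simps)
  have Ou: "bigO v e u"
  proof -
    have "bigO v (e + 0) (T * (1 / 2))" by (rule O_mult[OF _ half]) (use O_exact[OF T0] vT in simp)
    then have "bigO v e (T / 2)" by simp
    moreover have "bigO v e d" using Od by (rule O_mono) (use wle in simp)
    moreover have "bigO v e F" using OF by (rule O_mono) (use epos in simp)
    ultimately show ?thesis unfolding u_def by (intro O_add)
  qed
  define m where "m = 2 * p - 2"
  have G: "bigO v (2 * e) (inverse (1 + u) ^ m - 1 + of_nat m * u)" by (rule O_invpow[OF Ou epos])
  have Tm: "T ^ m = pp (2 / of_nat p ^ n)"
  proof -
    have ev: "even (N * m)" by (simp add: m_def)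
    have mz: "\<zeta> ^ m = 1" using zr p3 by (simp add: m_def right_diff_distrib')
    have "of_nat m * e = 2 / of_nat p ^ n"
    proof -
      have "(of_nat m :: rat) = 2 * (q - 1)" using p3 by (simp add: m_def q_def of_nat_diff)
      then have "of_nat m * e = 2 * (q - 1) * (1 / (q ^ n * (q - 1)))" by (simp add: e_q)
      also have "\<dots> = 2 / q ^ n" using q1 qpos by (simp add: field_simps)
      finally show ?thesis by (simp add: q_def)
    qed
    then show ?thesis unfolding T_def
      by (simp add: power_mult_distrib pppow neg_one_even_power[OF ev] mz power_mult[symmetric])
  qed
  define A where "A = (-1) ^ n * \<zeta> * pp (1 / (of_nat p ^ n * (of_nat p - 1)))"
  define B where "B = (if p = 3 then pp (2 / (3 ^ n * 2)) * \<sigma> (Suc n) else 0)"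
  have TA: "T = - A" unfolding T_def A_def e_def N_def by simp
  have vA: "v A = e" and A0: "A \<noteq> 0" using vT T0 TA v_uminus[of A] by auto
  have Bd: "B = d" unfolding B_def d_def s_def N_def e_def by simp
  have mq: "(of_nat m :: 'a) = 2 * of_nat p - 2" using p3 by (simp add: m_def of_nat_diff)
  define eps where "eps = inverse (1 + u) ^ m - 1 + A + B"
  have eps_eq: "eps = (inverse (1 + u) ^ m - 1 + of_nat m * u) + of_nat p * A - of_nat m * F
      + (if p = 3 then - (of_nat p * d) else 0)"
  proof (cases "p = 3")
    case True
    then show ?thesis unfolding eps_def u_def Bd mq TA by (simp add: algebra_simps)
  next
    case False
    then show ?thesis unfolding eps_def u_def Bd mq TA d_def by (simp add: algebra_simps)
  qed
  have Oeps: "bigO v (2 * e) eps"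
  proof -
    have "bigO v (1 + e) (of_nat p * A)" using O_mult[OF O_exact O_exact[OF A0]] vp vA pr
      by (metis of_nat_eq_0_iff not_prime_0)
    then have O1: "bigO v (2 * e) (of_nat p * A)" by (rule O_mono) (use ele in simp)
    have O2: "bigO v (2 * e) (of_nat m * F)" using O_mult[OF O_of_nat OF] by simp
    have O3: "bigO v (2 * e) (if p = 3 then - (of_nat p * d) else 0)"
    proof -
      have "bigO v (1 + (2 * e - w)) (of_nat p * d)" using O_mult[OF O_exact Od] vp pr
        by (metis of_nat_eq_0_iff not_prime_0)
      then have "bigO v (2 * e) (of_nat p * d)" by (rule O_mono) (use wle ele in simp)
      then show ?thesis using O_uminus[of "2 * e" "of_nat p * d"] by (simp only: if_True if_False O_0 split: if_split) blast
    qed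
    show ?thesis unfolding eps_eq by (intro O_add O_diff G O1 O2 O3)
  qed
  have e2: "2 / (of_nat p ^ n * (of_nat p - 1)) = 2 * e" by (simp add: e_def)
  have final: "inverse (zp (Suc n) - 1) ^ (2 * p - 2) = pp (- 2 / of_nat p ^ n) * (1 - A - B + eps)"
  proof -
    have "inverse (zp (Suc n) - 1) ^ (2 * p - 2) = inverse (T ^ m) * inverse (1 + u) ^ m"
      using X unfolding N_def m_def by (simp add: power_mult_distrib power_inverse)
    also have "inverse (T ^ m) = pp (- 2 / of_nat p ^ n)" unfolding Tm using ppneg by simp
    finally show ?thesis unfolding eps_def by simp
  qed
  show ?thesis
    by (rule exI[of _ eps]) (use Oeps final e2 in \<open>simp add: A_def B_def\<close>)
qed

end
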